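(* Let $T:\mathcal{X}\to\mathcal{X}$, data points $x_1,\dots,x_N$ with $x_i^+=T(x_i)$, and observables be equipped with the empirical inner product $\langle f,g\rangle=\frac1N\sum_{i=1}^N f(x_i)g(x_i)$, with Koopman operator $(\mathcal{K}f)(x)=f(T(x))$. Consider a current search space $\mathcal{S}_k$ spanned by a dictionary $\Psi_k=[\psi_1,\dots,\psi_m]$ such that $A_k=\Psi_k(X)$ and $B_k=\Psi_k(X^+)$ have full column rank. One iteration of the Single-Principal-Vector (SPV) pruning algorithm replaces $\mathcal{S}_k$ by $\mathcal{S}_k\setminus\mathrm{span}(u^{\mathcal{S}}_{\max})$, the orthogonal complement of $u^{\mathcal{S}}_{\max}$ within $\mathcal{S}_k$, where $u^{\mathcal{S}}_{\max}\in\mathcal{S}_k$ is a principal vector of $\mathcal{S}_k$ with respect to $\mathcal{K}\mathcal{S}_k$ associated with the largest principal angle $\theta_{\max}$. One iteration of the Recursive Forward-Backward EDMD (RFB-EDMD) algorithm replaces $\mathcal{S}_k$ by $\mathcal{S}_k\setminus\mathrm{span}\{\Psi_k(\cdot)v_{\max}\}$, where $v_{\max}$ is an eigenvector of the consistency matrix $M_c=I-(A_k^\dagger B_k)(B_k^\dagger A_k)$ associated with its largest eigenvalue $\lambda_{\max}$. Then $\lambda_{\max}=\sin^2\theta_{\max}$ and $\Psi_k(\cdot)v_{\max}$ is a principal vector of $\mathcal{S}_k$ associated with $\theta_{\max}$; consequently the SPV and RFB-EDMD algorithms are algebraically equivalent, removing the identical one-dimensional subspace from the search space at every iteration, and hence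 produce identical sequences of nested subspaces $\mathcal{S}_0\supset\mathcal{S}_1\supset\cdots$ and the same final output.
   Context: $M^\dagger$ is the Moore–Penrose pseudoinverse; $\Psi_k(X)$ and $\Psi_k(X^+)$ are the $N\times m$ matrices with $i$-th rows $\Psi_k(x_i)$ and $\Psi_k(x_i^+)$. Principal angles and vectors between subspaces $\mathcal{U},\mathcal{V}$: angles $0\le\theta_1\le\dots\le\theta_k\le\pi/2$ defined recursively by $\cos\theta_j=\max|\langle u,v\rangle|$ over unit $u\in\mathcal{U}$, $v\in\mathcal{V}$ orthogonal to previously selected principal vectors; maximizers are the $j$-th pair of principal vectors; $\theta_{\max}$ is the largest angle. The SPV algorithm iterates the stated removal until $\sin\theta_{\max}\le\epsilon$ for a tolerance $\epsilon$ (or the subspace becomes empty). *)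

theory Defs
  imports "HOL-Analysis.Analysis"
begin

text \<open>Observables are real-valued functions on the state space 'x.  The data points
  are x i, i ranging over the finite index type 'n (so N = CARD('n)).
  Empirical inner product on observables.\<close>
definition emp_ip :: "('n::finite \<Rightarrow> 'x) \<Rightarrow> ('x \<Rightarrow> real) \<Rightarrow> ('x \<Rightarrow> real) \<Rightarrow> real" where
  "emp_ip xs f g = (\<Sum>i\<in>UNIV. f (xs i) * g (xs i)) / real CARD('n)"

text \<open>Koopman operator.\<close>
definition koopman :: "('x \<Rightarrow> 'x) \<Rightarrow> ('x \<Rightarrow> real) \<Rightarrow> ('x \<Rightarrow> real)" where
  "koopman T f = (\<lambda>y. f (T y))"

text \<open>Dictionary Psi = [psi_1..psi_m] indexed by the finite type 'm; Psi(.) c.\<close>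
definition dict_comb :: "('m::finite \<Rightarrow> 'x \<Rightarrow> real) \<Rightarrow> real^'m \<Rightarrow> ('x \<Rightarrow> real)" where
  "dict_comb \<psi> c = (\<lambda>y. \<Sum>j\<in>UNIV. c $ j * \<psi> j y)"

text \<open>Search space spanned by the dictionary.\<close>
definition dict_span :: "('m::finite \<Rightarrow> 'x \<Rightarrow> real) \<Rightarrow> ('x \<Rightarrow> real) set" where
  "dict_span \<psi> = range (dict_comb \<psi>)"

text \<open>Data matrix Psi(Y): N x m matrix with i-th row Psi(y_i).\<close>
definition data_matrix :: "('m::finite \<Rightarrow> 'x \<Rightarrow> real) \<Rightarrow> ('n::finite \<Rightarrow> 'x) \<Rightarrow> real^'m^'n" where
  "data_matrix \<psi> ys = (\<chi> i j. \<psi> j (ys i))"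

definition full_column_rank :: "real^'m^'n \<Rightarrow> bool" where
  "full_column_rank M \<longleftrightarrow> (\<forall>v. M *v v = 0 \<longrightarrow> v = 0)"

text \<open>Moore--Penrose pseudoinverse (unique matrix satisfying the Penrose equations).\<close>
definition pinv :: "real^'m^'n \<Rightarrow> real^'n^'m" where
  "pinv M = (THE X. M ** X ** M = M \<and> X ** M ** X = X \<and>
                    transpose (M ** X) = M ** X \<and> transpose (X ** M) = X ** M)"

definition real_eigenvector :: "real^'m^'m \<Rightarrow> real \<Rightarrow> real^'m \<Rightarrow> bool" where
  "real_eigenvector M \<mu> v \<longleftrightarrow> v \<noteq> 0 \<and> M *v v = \<mu> *\<^sub>R v"

definition real_eigenvalue :: "real^'m^'m \<Rightarrow> real \<Rightarrow> bool" where
  "real_eigenvalue M \<mu> \<longleftrightarrow> (\<exists>v. real_eigenvector M \<mu> v)"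

text \<open>Principal vectors (recursive definition) w.r.t. the inner product ip:
  a list of pairs (u_j, v_j); the j-th pair consists of unit vectors u_j in U, v_j in V,
  orthogonal to the previously selected u_i resp. v_i, maximizing |<u,v>| among all such.\<close>
definition admissible_pair ::
  "(('x \<Rightarrow> real) \<Rightarrow> ('x \<Rightarrow> real) \<Rightarrow> real) \<Rightarrow> ('x \<Rightarrow> real) set \<Rightarrow> ('x \<Rightarrow> real) set
    \<Rightarrow> (('x \<Rightarrow> real) \<times> ('x \<Rightarrow> real)) list \<Rightarrow> ('x \<Rightarrow> real) \<Rightarrow> ('x \<Rightarrow> real) \<Rightarrow> bool" where
  "admissible_pair ip U V prev u v \<longleftrightarrow>
     u \<in> U \<and> v \<in> V \<and> ip u u = 1 \<and> ip v v = 1 \<and>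
     (\<forall>p\<in>set prev. ip u (fst p) = 0 \<and> ip v (snd p) = 0)"

definition principal_seq ::
  "(('x \<Rightarrow> real) \<Rightarrow> ('x \<Rightarrow> real) \<Rightarrow> real) \<Rightarrow> ('x \<Rightarrow> real) set \<Rightarrow> ('x \<Rightarrow> real) set
    \<Rightarrow> (('x \<Rightarrow> real) \<times> ('x \<Rightarrow> real)) list \<Rightarrow> bool" where
  "principal_seq ip U V ps \<longleftrightarrow>
     (\<forall>j<length ps.
        admissible_pair ip U V (take j ps) (fst (ps ! j)) (snd (ps ! j)) \<and>
        (\<forall>u' v'. admissible_pair ip U V (take j ps) u' v' \<longrightarrow>
                 \<bar>ip u' v'\<bar> \<le> \<bar>ip (fst (ps ! j)) (snd (ps ! j))\<bar>))"

text \<open>A complete sequence: no further unit vector of U (or of V) orthogonal to the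
  already selected ones exists, i.e. its length is min(dim U, dim V).\<close>
definition complete_principal_seq ::
  "(('x \<Rightarrow> real) \<Rightarrow> ('x \<Rightarrow> real) \<Rightarrow> real) \<Rightarrow> ('x \<Rightarrow> real) set \<Rightarrow> ('x \<Rightarrow> real) set
    \<Rightarrow> (('x \<Rightarrow> real) \<times> ('x \<Rightarrow> real)) list \<Rightarrow> bool" where
  "complete_principal_seq ip U V ps \<longleftrightarrow> principal_seq ip U V ps \<and>
     ((\<not> (\<exists>u\<in>U. ip u u = 1 \<and> (\<forall>p\<in>set ps. ip u (fst p) = 0))) \<or>
      (\<not> (\<exists>v\<in>V. ip v v = 1 \<and> (\<forall>p\<in>set ps. ip v (snd p) = 0))))"

text \<open>Principal angle of a pair: cos theta = |<u,v>|.\<close>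
definition pangle :: "(('x \<Rightarrow> real) \<Rightarrow> ('x \<Rightarrow> real) \<Rightarrow> real) \<Rightarrow> ('x \<Rightarrow> real) \<times> ('x \<Rightarrow> real) \<Rightarrow> real" where
  "pangle ip p = arccos \<bar>ip (fst p) (snd p)\<bar>"

text \<open>Orthogonal complement of span{w} within S.\<close>
definition remove_dir :: "(('x \<Rightarrow> real) \<Rightarrow> ('x \<Rightarrow> real) \<Rightarrow> real) \<Rightarrow> ('x \<Rightarrow> real) set \<Rightarrow> ('x \<Rightarrow> real) \<Rightarrow> ('x \<Rightarrow> real) set" where
  "remove_dir ip S w = {f\<in>S. ip f w = 0}"

end

theory Submission
  imports Defs
begin


lemma pert_real:
  fixes d e K :: real
  assumes H: "\<And>t. (d+t*e)^2 \<le> d^2*(1+t^2*K)" and K: "K \<ge> 0"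
  shows "e = 0"
proof (rule ccontr)
  assume e: "e \<noteq> 0"
  show False
  proof (cases "d = 0")
    case True
    have "e^2 > 0" using e by simp
    with H[of 1] True show False by simp
  next
    case False
    define s where "s = 1/(d^2*K+1)"
    have dk: "d^2*K \<ge> 0" using K by simp
    have sp: "s > 0" using dk by (simp add: s_def)
    have s1: "s * (d^2*K) < 1" using dk unfolding s_def by (simp add: divide_less_eq_1_pos)
    define t where "t = s*d*e"
    have eq: "(d+t*e)^2 - d^2*(1+t^2*K) = (s*d^2*e^2) * (2 + s*e^2 - s*d^2*K)"
      unfolding t_def by (simp add: power2_eq_square algebra_simps)
    have "s*d^2*e^2 > 0" using sp False e by simp
    moreover have "2 + s*e^2 - s*d^2*K > 0"
    proof -
      have "s*e^2 \<ge> 0" using sp by simp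
      moreover have "s*d^2*K = s*(d^2*K)" by simp
      ultimately show ?thesis using s1 by linarith
    qed
    ultimately have "(d+t*e)^2 - d^2*(1+t^2*K) > 0" using eq by simp
    with H[of t] show False by simp
  qed
qed

definition vadm :: "'a::euclidean_space set \<Rightarrow> 'a set \<Rightarrow> ('a\<times>'a) list \<Rightarrow> 'a \<Rightarrow> 'a \<Rightarrow> bool" where
  "vadm U V prev u v \<longleftrightarrow> u \<in> U \<and> v \<in> V \<and> inner u u = 1 \<and> inner v v = 1 \<and>
     (\<forall>p\<in>set prev. inner u (fst p) = 0 \<and> inner v (snd p) = 0)"

definition vprinc :: "'a::euclidean_space set \<Rightarrow> 'a set \<Rightarrow> ('a\<times>'a) list \<Rightarrow> bool" where
  "vprinc U V ps \<longleftrightarrow> (\<forall>j<length ps. vadm U V (take j ps) (fst (ps!j)) (snd (ps!j)) \<and>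
      (\<forall>u' v'. vadm U V (take j ps) u' v' \<longrightarrow> \<bar>inner u' v'\<bar> \<le> \<bar>inner (fst (ps!j)) (snd (ps!j))\<bar>))"

definition vcomplete :: "'a::euclidean_space set \<Rightarrow> 'a set \<Rightarrow> ('a\<times>'a) list \<Rightarrow> bool" where
  "vcomplete U V ps \<longleftrightarrow> vprinc U V ps \<and>
     ((\<not>(\<exists>u\<in>U. inner u u = 1 \<and> (\<forall>p\<in>set ps. inner u (fst p) = 0))) \<or>
      (\<not>(\<exists>v\<in>V. inner v v = 1 \<and> (\<forall>p\<in>set ps. inner v (snd p) = 0))))"

definition hyp :: "'a::euclidean_space set \<Rightarrow> 'a \<Rightarrow> 'a set" where
  "hyp U e = {x\<in>U. inner x e = 0}"

definition ismax :: "'a::euclidean_space set \<Rightarrow> 'a set \<Rightarrow> 'a \<Rightarrow> 'a \<Rightarrow> bool" where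
  "ismax U V u0 v0 \<longleftrightarrow> u0\<in>U \<and> v0\<in>V \<and> inner u0 u0 = 1 \<and> inner v0 v0 = 1 \<and>
     (\<forall>u\<in>U. \<forall>v\<in>V. inner u u = 1 \<longrightarrow> inner v v = 1 \<longrightarrow> \<bar>inner u v\<bar> \<le> \<bar>inner u0 v0\<bar>)"

definition crossorth :: "'a::euclidean_space set \<Rightarrow> 'a set \<Rightarrow> 'a \<Rightarrow> 'a \<Rightarrow> bool" where
  "crossorth U V u v \<longleftrightarrow> (\<forall>y\<in>V. inner y v = 0 \<longrightarrow> inner u y = 0) \<and> (\<forall>x\<in>U. inner x u = 0 \<longrightarrow> inner x v = 0)"

definition MP :: "'a::euclidean_space set \<Rightarrow> 'a set \<Rightarrow> real \<Rightarrow> bool" where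
  "MP U V c \<longleftrightarrow> (\<forall>u\<in>U. inner u u = 1 \<longrightarrow> (\<exists>v\<in>V. inner v v = 1 \<and> c \<le> \<bar>inner u v\<bar>))"

lemma vadm_cons: "vadm U V (p#pre) u v \<longleftrightarrow> vadm (hyp U (fst p)) (hyp V (snd p)) pre u v"
  by (auto simp: vadm_def hyp_def)

lemma vadm_nil: "vadm U V [] u v \<longleftrightarrow> u\<in>U \<and> v\<in>V \<and> inner u u = 1 \<and> inner v v = 1"
  by (simp add: vadm_def)

lemma vprinc_Cons: "vprinc U V (p#ps) \<longleftrightarrow> ismax U V (fst p) (snd p) \<and> vprinc (hyp U (fst p)) (hyp V (snd p)) ps"
  unfolding vprinc_def length_Cons All_less_Suc2
  by (auto simp: vadm_cons vadm_nil ismax_def)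

lemma vcomplete_Cons: "vcomplete U V (p#ps) \<longleftrightarrow> ismax U V (fst p) (snd p) \<and> vcomplete (hyp U (fst p)) (hyp V (snd p)) ps"
  unfolding vcomplete_def vprinc_Cons by (auto simp: hyp_def)

lemma vcomplete_Nil: "vcomplete U V [] \<longleftrightarrow> \<not>(\<exists>u\<in>U. inner u u = 1) \<or> \<not>(\<exists>v\<in>V. inner v v = 1)"
  by (simp add: vcomplete_def vprinc_def)

lemma vprinc_mem: "vprinc U V ps \<Longrightarrow> q \<in> set ps \<Longrightarrow> fst q \<in> U \<and> snd q \<in> V \<and> inner (fst q) (fst q) = 1 \<and> inner (snd q) (snd q) = 1"
  by (auto simp: vprinc_def vadm_def in_set_conv_nth)

lemma unit_sgn: "(x::'a::real_inner) \<noteq> 0 \<Longrightarrow> inner (sgn x) (sgn x) = 1"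
  by (simp add: norm_eq_1[symmetric] norm_sgn)

lemma sgn_in: "subspace U \<Longrightarrow> x \<in> U \<Longrightarrow> sgn (x::'a::real_normed_vector) \<in> U"
proof -
  assume "subspace U" "x \<in> U"
  hence "(inverse (norm x)) *\<^sub>R x \<in> U" by (simp add: subspace_scale)
  thus ?thesis by (simp add: sgn_div_norm)
qed

lemma subspace_hyp: "subspace U \<Longrightarrow> subspace (hyp U e)"
  by (auto simp: subspace_def hyp_def inner_add_left)

lemma hyp_sub: "hyp U e \<subseteq> U" by (auto simp: hyp_def)

lemma dim_hyp:
  fixes U :: "'a::euclidean_space set"
  assumes "subspace U" "e \<in> U" "e \<noteq> 0"
  shows "dim (hyp U e) = dim U - 1"
proof -
  have eq: "hyp U e = {y\<in>U. \<forall>x\<in>span{e}. orthogonal x y}"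
    by (auto simp: hyp_def span_singleton orthogonal_def inner_commute)
  have "span {e} \<subseteq> U" using assms by (simp add: span_minimal)
  from dim_subspace_orthogonal_to_vectors[OF subspace_span assms(1) this]
  show ?thesis using assms(3) by (simp add: eq[symmetric])
qed

lemma unit_exists:
  fixes U :: "'a::euclidean_space set"
  assumes "subspace U" "dim U \<noteq> 0" shows "\<exists>u\<in>U. inner u u = 1"
proof -
  from assms(2) obtain x where "x \<in> U" "x \<noteq> 0" by (auto simp: dim_eq_0)
  thus ?thesis using sgn_in[OF assms(1)] unit_sgn by blast
qed

lemma unit_dim:
  fixes U :: "'a::euclidean_space set"
  assumes "u \<in> U" "inner u u = 1" shows "dim U \<noteq> 0"
  using assms by (auto simp: dim_eq_0)

lemma ismax_sym: assumes "ismax U V u0 v0" shows "ismax V U v0 u0"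
proof -
  from assms have a: "v0\<in>V" "u0\<in>U" "inner v0 v0 = 1" "inner u0 u0 = 1"
    and M: "\<And>u v. u\<in>U \<Longrightarrow> v\<in>V \<Longrightarrow> inner u u = 1 \<Longrightarrow> inner v v = 1 \<Longrightarrow> \<bar>inner u v\<bar> \<le> \<bar>inner u0 v0\<bar>"
    by (auto simp: ismax_def)
  have "\<bar>inner v u\<bar> \<le> \<bar>inner v0 u0\<bar>" if "v\<in>V" "u\<in>U" "inner v v = 1" "inner u u = 1" for v u
    using M[OF that(2,1,4,3)] by (simp add: inner_commute)
  thus ?thesis using a unfolding ismax_def by blast
qed

lemma pert:
  fixes U V :: "'a::euclidean_space set"
  assumes sU: "subspace U" and mx: "ismax U V u0 v0" and u: "u \<in> U" and o: "inner u u0 = 0"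
  shows "inner u v0 = 0"
proof -
  from mx have u0: "u0 \<in> U" "inner u0 u0 = 1" and v0: "v0 \<in> V" "inner v0 v0 = 1"
    and M: "\<And>u v. u\<in>U \<Longrightarrow> v\<in>V \<Longrightarrow> inner u u = 1 \<Longrightarrow> inner v v = 1 \<Longrightarrow> \<bar>inner u v\<bar> \<le> \<bar>inner u0 v0\<bar>"
    by (auto simp: ismax_def)
  define d where "d = inner u0 v0"
  define e where "e = inner u v0"
  define K where "K = inner u u"
  have K: "K \<ge> 0" by (simp add: K_def)
  have "(d + t*e)^2 \<le> d^2 * (1 + t^2*K)" for t
  proof -
    define w where "w = u0 + t *\<^sub>R u"
    have ww: "inner w w = 1 + t^2*K" using o u0
      by (simp add: w_def inner_add_left inner_add_right inner_commute K_def power2_eq_square)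
    have wpos: "inner w w > 0" using ww K by (simp add: add_pos_nonneg)
    hence wne: "w \<noteq> 0" by auto
    have wU: "w \<in> U" using sU u0 u by (simp add: w_def subspace_add subspace_scale)
    have "\<bar>inner (sgn w) v0\<bar> \<le> \<bar>d\<bar>" using M[OF sgn_in[OF sU wU] v0(1) unit_sgn[OF wne] v0(2)] d_def by simp
    moreover have "inner (sgn w) v0 = inner w v0 / norm w" by (simp add: sgn_div_norm divide_inverse)
    moreover have "inner w v0 = d + t*e" by (simp add: w_def d_def e_def inner_add_left)
    ultimately have "\<bar>d + t*e\<bar> / norm w \<le> \<bar>d\<bar>" by simp
    hence "\<bar>d + t*e\<bar> \<le> \<bar>d\<bar> * norm w" using wne by (simp add: divide_le_eq)
    hence "(d+t*e)^2 \<le> (\<bar>d\<bar> * norm w)^2" by (simp add: abs_le_square_iff[symmetric])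
    also have "\<dots> = d^2 * inner w w" by (simp add: power_mult_distrib power2_norm_eq_inner)
    finally show ?thesis using ww by simp
  qed
  from pert_real[OF this K] show ?thesis by (simp add: e_def)
qed

lemma pert2:
  fixes U V :: "'a::euclidean_space set"
  assumes sV: "subspace V" and mx: "ismax U V u0 v0" and v: "v \<in> V" and o: "inner v v0 = 0"
  shows "inner u0 v = 0"
  using pert[OF sV ismax_sym[OF mx] v o] by (simp add: inner_commute)

lemma exists_max:
  fixes U V :: "'a::euclidean_space set"
  assumes "subspace U" "subspace V" "\<exists>u\<in>U. inner u u = 1" "\<exists>v\<in>V. inner v v = 1"
  shows "\<exists>u0 v0. ismax U V u0 v0"
proof -
  let ?S = "(U \<inter> sphere 0 1) \<times> (V \<inter> sphere 0 1)"
  have "compact ?S" using assms by (intro compact_Times closed_Int_compact closed_subspace compact_sphere)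
  moreover have "?S \<noteq> {}" using assms(3,4) by (auto simp: norm_eq_1)
  moreover have "continuous_on ?S (\<lambda>p. \<bar>inner (fst p) (snd p)\<bar>)" by (intro continuous_intros)
  ultimately obtain p where pS: "p\<in>?S" and pm: "\<forall>q\<in>?S. \<bar>inner (fst q) (snd q)\<bar> \<le> \<bar>inner (fst p) (snd p)\<bar>"
    using continuous_attains_sup by blast
  from pS have p1: "fst p \<in> U" "inner (fst p) (fst p) = 1" "snd p \<in> V" "inner (snd p) (snd p) = 1"
    by (auto simp: mem_Times_iff norm_eq_1[symmetric])
  have "\<forall>u\<in>U. \<forall>v\<in>V. inner u u = 1 \<longrightarrow> inner v v = 1 \<longrightarrow> \<bar>inner u v\<bar> \<le> \<bar>inner (fst p) (snd p)\<bar>"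
  proof (intro ballI impI)
    fix u v assume "u \<in> U" "v \<in> V" "inner u u = 1" "inner v v = 1"
    hence "(u,v) \<in> ?S" by (simp add: norm_eq_1)
    with pm show "\<bar>inner u v\<bar> \<le> \<bar>inner (fst p) (snd p)\<bar>" by force
  qed
  thus ?thesis unfolding ismax_def using p1 by blast
qed



lemma decomp_hyp:
  fixes U :: "'a::euclidean_space set"
  assumes "subspace U" "u \<in> U" "e \<in> U" "inner e e = 1"
  shows "u - inner u e *\<^sub>R e \<in> hyp U e"
  using assms by (simp add: hyp_def subspace_diff subspace_scale inner_diff_left)

lemma MP_step:
  fixes U V :: "'a::euclidean_space set"
  assumes sU: "subspace U" and sV: "subspace V" and mx: "ismax U V u0 v0"
    and mp': "MP (hyp U u0) (hyp V v0) c" and cle: "c \<le> \<bar>inner u0 v0\<bar>"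
  shows "MP U V c"
  unfolding MP_def
proof (intro ballI impI)
  fix u assume uU: "u \<in> U" and uu: "inner u u = 1"
  from mx have u0: "u0 \<in> U" "inner u0 u0 = 1" and v0: "v0 \<in> V" "inner v0 v0 = 1"
    by (auto simp: ismax_def)
  define a where "a = inner u u0"
  define u' where "u' = u - a *\<^sub>R u0"
  define d0 where "d0 = inner u0 v0"
  have u'h: "u' \<in> hyp U u0" unfolding u'_def a_def by (rule decomp_hyp[OF sU uU u0])
  hence u'U: "u' \<in> U" and u'o: "inner u' u0 = 0" by (auto simp: hyp_def)
  have ueq: "u = a *\<^sub>R u0 + u'" by (simp add: u'_def)
  have nu: "a^2 + inner u' u' = 1"
  proof -
    have "inner u u = a^2 * inner u0 u0 + 2 * a * inner u' u0 + inner u' u'"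
      unfolding ueq by (simp add: inner_add_left inner_add_right inner_commute power2_eq_square algebra_simps)
    thus ?thesis using uu u0 u'o by simp
  qed
  have u'v0: "inner u' v0 = 0" by (rule pert[OF sU mx u'U u'o])
  have uv0: "inner u v0 = a * d0" unfolding ueq by (simp add: inner_add_left u'v0 d0_def)
  show "\<exists>v\<in>V. inner v v = 1 \<and> c \<le> \<bar>inner u v\<bar>"
  proof (cases "u' = 0")
    case True
    hence "a^2 = 1" using nu by simp
    hence "\<bar>a\<bar> = 1" by (smt (verit) power2_eq_1_iff)
    hence "\<bar>inner u v0\<bar> = \<bar>d0\<bar>" using uv0 by (simp add: abs_mult)
    thus ?thesis using v0 cle d0_def by auto
  next
    case False
    define n where "n = norm u'"
    have np: "n > 0" using False by (simp add: n_def)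
    have n2: "n^2 = inner u' u'" by (simp add: n_def power2_norm_eq_inner)
    have su: "sgn u' \<in> hyp U u0" by (rule sgn_in[OF subspace_hyp[OF sU] u'h])
    obtain v' where v'h: "v' \<in> hyp V v0" and v'v': "inner v' v' = 1" and cv': "c \<le> \<bar>inner (sgn u') v'\<bar>"
      using mp' su unit_sgn[OF False] unfolding MP_def by blast
    have v'V: "v' \<in> V" and v'o: "inner v' v0 = 0" using v'h by (auto simp: hyp_def)
    have u0v': "inner u0 v' = 0" by (rule pert2[OF sV mx v'V v'o])
    have sgneq: "inner u' v' = n * inner (sgn u') v'"
      using np by (simp add: sgn_div_norm n_def)
    have uv': "inner u v' = inner u' v'" unfolding ueq by (simp add: inner_add_left u0v')
    define s1 where "s1 = (if d0 \<ge> 0 then 1 else -1::real)"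
    define s2 where "s2 = (if inner u' v' \<ge> 0 then 1 else -1::real)"
    have s1sq: "s1 * s1 = 1" and s2sq: "s2 * s2 = 1" by (simp_all add: s1_def s2_def)
    have s1a: "s1 * d0 = \<bar>d0\<bar>" by (simp add: s1_def)
    have s2a: "s2 * inner u' v' = \<bar>inner u' v'\<bar>" by (simp add: s2_def)
    define v where "v = (s1*a) *\<^sub>R v0 + (s2*n) *\<^sub>R v'"
    have vV: "v \<in> V" using sV v0 v'V by (simp add: v_def subspace_add subspace_scale)
    have v0v': "inner v0 v' = 0" using v'o by (simp add: inner_commute)
    have "inner v v = (s1*a)^2 * inner v0 v0 + 2*(s1*a)*(s2*n) * inner v0 v' + (s2*n)^2 * inner v' v'"
      unfolding v_def by (simp add: inner_add_left inner_add_right inner_commute power2_eq_square algebra_simps)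
    also have "\<dots> = (s1 * s1)*a^2 + (s2 * s2)*n^2" using v0 v'v' v0v' by (simp add: power2_eq_square algebra_simps)
    also have "\<dots> = 1" using s1sq s2sq nu n2 by simp
    finally have vv: "inner v v = 1" .
    have "inner u v = (s1*a) * inner u v0 + (s2*n) * inner u v'"
      unfolding v_def by (simp add: inner_add_right)
    also have "\<dots> = a^2 * (s1 * d0) + n * (s2 * inner u' v')" using uv0 uv' by (simp add: algebra_simps power2_eq_square)
    also have "\<dots> = a^2 * \<bar>d0\<bar> + n * \<bar>inner u' v'\<bar>" using s1a s2a by simp
    finally have uv: "inner u v = a^2 * \<bar>d0\<bar> + n * \<bar>inner u' v'\<bar>" .
    have "n * \<bar>inner u' v'\<bar> = n^2 * \<bar>inner (sgn u') v'\<bar>"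
      using sgneq np by (simp add: abs_mult power2_eq_square)
    hence uv2: "inner u v = a^2 * \<bar>d0\<bar> + n^2 * \<bar>inner (sgn u') v'\<bar>" using uv by simp
    have "a^2 * c \<le> a^2 * \<bar>d0\<bar>" using cle d0_def by (simp add: mult_left_mono)
    moreover have "n^2 * c \<le> n^2 * \<bar>inner (sgn u') v'\<bar>" using cv' by (simp add: mult_left_mono)
    ultimately have "c \<le> inner u v" using uv2 nu n2
      by (metis add_mono distrib_right mult_1)
    hence "c \<le> \<bar>inner u v\<bar>" by simp
    thus ?thesis using vV vv by blast
  qed
qed

lemma main1:
  fixes ps :: "('a::euclidean_space \<times> 'a) list"
  shows "subspace U \<Longrightarrow> subspace V \<Longrightarrow> dim U = dim V \<Longrightarrow> vcomplete U V ps \<Longrightarrow>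
    length ps = dim U \<and> (ps \<noteq> [] \<longrightarrow> crossorth U V (fst (last ps)) (snd (last ps)) \<and>
       MP U V \<bar>inner (fst (last ps)) (snd (last ps))\<bar>)"
proof (induction ps arbitrary: U V)
  case Nil
  from Nil.prems(4) have "\<not>(\<exists>u\<in>U. inner u u = 1) \<or> \<not>(\<exists>v\<in>V. inner v v = 1)" by (simp add: vcomplete_Nil)
  hence "dim U = 0 \<or> dim V = 0" using unit_exists Nil.prems(1,2) by blast
  thus ?case using Nil.prems(3) by simp
next
  case (Cons p ps)
  obtain u0 v0 where p: "p = (u0,v0)" by (cases p)
  have mx: "ismax U V u0 v0" and cp: "vcomplete (hyp U u0) (hyp V v0) ps"
    using Cons.prems(4) by (simp_all add: vcomplete_Cons p)
  have u0: "u0\<in>U" "inner u0 u0 = 1" and v0: "v0 \<in> V" "inner v0 v0 = 1" using mx by (auto simp: ismax_def)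
  have u0ne: "u0 \<noteq> 0" and v0ne: "v0 \<noteq> 0" using u0 v0 by auto
  have dU: "dim (hyp U u0) = dim U - 1" by (rule dim_hyp[OF Cons.prems(1) u0(1) u0ne])
  have dV: "dim (hyp V v0) = dim V - 1" by (rule dim_hyp[OF Cons.prems(2) v0(1) v0ne])
  have dU1: "dim U \<noteq> 0" by (rule unit_dim[OF u0])
  have IH: "length ps = dim (hyp U u0) \<and> (ps \<noteq> [] \<longrightarrow> crossorth (hyp U u0) (hyp V v0) (fst (last ps)) (snd (last ps)) \<and>
       MP (hyp U u0) (hyp V v0) \<bar>inner (fst (last ps)) (snd (last ps))\<bar>)"
    using Cons.IH[OF subspace_hyp[OF Cons.prems(1)] subspace_hyp[OF Cons.prems(2)] _ cp] dU dV Cons.prems(3) by simp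
  have dpos: "0 < dim U" using dU1 by linarith
  have len: "length (p#ps) = dim U" using IH dU dpos by (simp del: dim_eq_0)
  have pertU: "\<And>x. x\<in>U \<Longrightarrow> inner x u0 = 0 \<Longrightarrow> inner x v0 = 0" using pert[OF Cons.prems(1) mx] by blast
  have pertV: "\<And>y. y\<in>V \<Longrightarrow> inner y v0 = 0 \<Longrightarrow> inner u0 y = 0" using pert2[OF Cons.prems(2) mx] by blast
  show ?case
  proof (cases "ps = []")
    case True
    then have "dim (hyp U u0) = 0" using IH by simp
    hence hz: "hyp U u0 \<subseteq> {0}" by simp
    have co: "crossorth U V u0 v0" using pertU pertV by (simp add: crossorth_def)
    have "MP U V \<bar>inner u0 v0\<bar>"
      unfolding MP_def
    proof (intro ballI impI)
      fix u assume uU: "u \<in> U" and uu: "inner u u = 1"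
      define a where "a = inner u u0"
      have "u - a *\<^sub>R u0 \<in> hyp U u0" unfolding a_def by (rule decomp_hyp[OF Cons.prems(1) uU u0])
      hence ue: "u = a *\<^sub>R u0" using hz by auto
      have "a^2 = 1" using uu u0 unfolding ue by (simp add: power2_eq_square)
      hence "\<bar>a\<bar> = 1" by (smt (verit) power2_eq_1_iff)
      moreover have "inner u v0 = a * inner u0 v0" using ue by simp
      ultimately show "\<exists>v\<in>V. inner v v = 1 \<and> \<bar>inner u0 v0\<bar> \<le> \<bar>inner u v\<bar>" using v0 by (auto simp: abs_mult)
    qed
    then show ?thesis using len co True p by simp
  next
    case False
    define u where "u = fst (last ps)"
    define v where "v = snd (last ps)"
    have lst: "last (p#ps) = last ps" using False by simp
    from IH False have co': "crossorth (hyp U u0) (hyp V v0) u v" and mp': "MP (hyp U u0) (hyp V v0) \<bar>inner u v\<bar>"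
      by (auto simp: u_def v_def)
    have "last ps \<in> set ps" using False by simp
    from vprinc_mem[OF _ this] cp have mem: "u \<in> hyp U u0" "inner u u = 1" "v \<in> hyp V v0" "inner v v = 1"
      by (auto simp: vcomplete_def u_def v_def)
    hence uU: "u \<in> U" "inner u u0 = 0" and vV: "v \<in> V" "inner v v0 = 0" by (auto simp: hyp_def)
    have cle: "\<bar>inner u v\<bar> \<le> \<bar>inner u0 v0\<bar>" using mx uU vV mem by (auto simp: ismax_def)
    have co: "crossorth U V u v"
      unfolding crossorth_def
    proof (intro conjI ballI impI)
      fix y assume y: "y \<in> V" "inner y v = 0"
      define b where "b = inner y v0"
      have yh: "y - b *\<^sub>R v0 \<in> hyp V v0" unfolding b_def by (rule decomp_hyp[OF Cons.prems(2) y(1) v0])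
      moreover have "inner (y - b *\<^sub>R v0) v = 0"
      proof -
        have "inner v0 v = 0" using vV(2) by (simp add: inner_commute)
        thus ?thesis using y(2) by (simp add: inner_diff_left)
      qed
      ultimately have "inner u (y - b *\<^sub>R v0) = 0" using co' by (auto simp: crossorth_def)
      moreover have "inner u v0 = 0" using pertU uU by blast
      ultimately show "inner u y = 0" by (simp add: inner_diff_right)
    next
      fix x assume x: "x \<in> U" "inner x u = 0"
      define a where "a = inner x u0"
      have "x - a *\<^sub>R u0 \<in> hyp U u0" unfolding a_def by (rule decomp_hyp[OF Cons.prems(1) x(1) u0])
      moreover have "inner (x - a *\<^sub>R u0) u = 0"
      proof -
        have "inner u0 u = 0" using uU(2) by (simp add: inner_commute)
        thus ?thesis using x(2) by (simp add: inner_diff_left)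
      qed
      ultimately have "inner (x - a *\<^sub>R u0) v = 0" using co' by (auto simp: crossorth_def)
      moreover have "inner u0 v = 0" using pertV vV by blast
      ultimately show "inner x v = 0" by (simp add: inner_diff_left)
    qed
    have mp: "MP U V \<bar>inner u v\<bar>" by (rule MP_step[OF Cons.prems(1,2) mx mp' cle])
    show ?thesis using len co mp lst by (simp add: u_def v_def)
  qed
qed



lemma main0:
  fixes U V :: "'a::euclidean_space set"
  shows "subspace U \<Longrightarrow> subspace V \<Longrightarrow> dim U = k \<Longrightarrow> dim V = k \<Longrightarrow> \<exists>ps. vcomplete U V ps"
proof (induction k arbitrary: U V)
  case 0
  have "\<not>(\<exists>u\<in>U. inner u u = 1)" using unit_dim 0 by blast
  hence "vcomplete U V []" by (simp add: vcomplete_Nil)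
  thus ?case by blast
next
  case (Suc k)
  obtain u0 v0 where mx: "ismax U V u0 v0"
    using exists_max[OF Suc.prems(1,2) unit_exists[OF Suc.prems(1)] unit_exists[OF Suc.prems(2)]] Suc.prems(3,4)
    by auto
  have u0: "u0\<in>U" "inner u0 u0 = 1" and v0: "v0 \<in> V" "inner v0 v0 = 1" using mx by (auto simp: ismax_def)
  have u0ne: "u0 \<noteq> 0" and v0ne: "v0 \<noteq> 0" using u0 v0 by auto
  have dU: "dim (hyp U u0) = k" using dim_hyp[OF Suc.prems(1) u0(1) u0ne] Suc.prems(3) by simp
  have dV: "dim (hyp V v0) = k" using dim_hyp[OF Suc.prems(2) v0(1) v0ne] Suc.prems(4) by simp
  obtain ps where "vcomplete (hyp U u0) (hyp V v0) ps"
    using Suc.IH[OF subspace_hyp[OF Suc.prems(1)] subspace_hyp[OF Suc.prems(2)] dU dV] by blast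
  hence "vcomplete U V ((u0,v0)#ps)" using mx by (simp add: vcomplete_Cons)
  thus ?case by blast
qed

lemma norm_proj_le:
  fixes v e :: "'a::euclidean_space"
  assumes "inner e e = 1" "inner v v = 1"
  shows "norm (v - inner v e *\<^sub>R e) \<le> 1"
proof -
  define c where "c = inner v e"
  have ce: "inner e v = c" by (simp add: c_def inner_commute)
  have "inner (v - c *\<^sub>R e) (v - c *\<^sub>R e) = inner v v - c^2"
    using assms(1) by (simp add: inner_diff_left inner_diff_right ce c_def[symmetric] power2_eq_square algebra_simps)
  hence "(norm (v - inner v e *\<^sub>R e))^2 = inner v v - (inner v e)^2"
    by (simp add: power2_norm_eq_inner c_def)
  also have "\<dots> \<le> 1" using assms(2) by simp
  finally show ?thesis by (simp add: power_le_one_iff abs_le_square_iff[symmetric])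
qed

lemma ismax_bil:
  fixes U V :: "'a::euclidean_space set"
  assumes sU: "subspace U" and sV: "subspace V" and mx: "ismax U V u0 v0" and x: "x \<in> U" and y: "y \<in> V"
  shows "\<bar>inner x y\<bar> \<le> \<bar>inner u0 v0\<bar> * norm x * norm y"
proof (cases "x = 0 \<or> y = 0")
  case True thus ?thesis by auto
next
  case False
  hence xn: "x \<noteq> 0" and yn: "y \<noteq> 0" by auto
  have "\<bar>inner (sgn x) (sgn y)\<bar> \<le> \<bar>inner u0 v0\<bar>"
    using mx sgn_in[OF sU x] sgn_in[OF sV y] unit_sgn[OF xn] unit_sgn[OF yn] by (auto simp: ismax_def)
  moreover have "inner (sgn x) (sgn y) = inner x y / (norm x * norm y)" by (simp add: sgn_div_norm divide_inverse)
  ultimately show ?thesis using xn yn by (simp add: abs_mult divide_le_eq mult.assoc)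
qed

lemma ineq1:
  fixes a b x y :: real
  assumes "a^2 + x^2 = 1" "b^2 + y^2 = 1"
  shows "\<bar>a\<bar> * \<bar>b\<bar> + \<bar>x\<bar> * \<bar>y\<bar> \<le> 1"
proof -
  have "2 * (\<bar>a\<bar> * \<bar>b\<bar>) \<le> a^2 + b^2" using sum_squares_bound[of "\<bar>a\<bar>" "\<bar>b\<bar>"] by simp
  moreover have "2 * (\<bar>x\<bar> * \<bar>y\<bar>) \<le> x^2 + y^2" using sum_squares_bound[of "\<bar>x\<bar>" "\<bar>y\<bar>"] by simp
  ultimately show ?thesis using assms by linarith
qed



definition Pprop :: "'a::euclidean_space set \<Rightarrow> 'a set \<Rightarrow> 'a \<Rightarrow> 'a \<Rightarrow> real \<Rightarrow> bool" where
  "Pprop U V us vs c \<longleftrightarrow> us\<in>U \<and> vs\<in>V \<and> inner us us = 1 \<and> inner vs vs = 1 \<and> c = \<bar>inner us vs\<bar> \<and>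
     crossorth U V us vs \<and> MP U V c"

lemma inner_split:
  fixes u v us vs :: "'a::euclidean_space"
  assumes "inner us v' = 0" "inner u' vs = 0"
    and "u = a *\<^sub>R us + u'" "v = b *\<^sub>R vs + v'"
  shows "inner u v = a * b * inner us vs + inner u' v'"
  using assms by (simp add: inner_add_left inner_add_right)

lemma main2_base:
  fixes U V :: "'a::euclidean_space set"
  assumes sU: "subspace U" and sV: "subspace V" and dU: "dim U = 1" and P: "Pprop U V us vs c"
  shows "vcomplete U V [(us,vs)]"
proof -
  from P have us: "us \<in> U" "inner us us = 1" and vs: "vs \<in> V" "inner vs vs = 1" and c: "c = \<bar>inner us vs\<bar>"
    and co: "crossorth U V us vs" by (auto simp: Pprop_def)
  have usn: "us \<noteq> 0" using us by auto
  have "dim (hyp U us) = 0" using dim_hyp[OF sU us(1) usn] dU by simp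
  hence hz: "hyp U us \<subseteq> {0}" by simp
  have c1: "vcomplete (hyp U us) (hyp V vs) []"
    using hz by (auto simp: vcomplete_Nil)
  have "ismax U V us vs"
    unfolding ismax_def
  proof (intro conjI ballI impI us vs)
    fix u v assume uU: "u \<in> U" and vV: "v \<in> V" and uu: "inner u u = 1" and vv: "inner v v = 1"
    define a where "a = inner u us"
    define b where "b = inner v vs"
    have "u - a *\<^sub>R us \<in> hyp U us" unfolding a_def by (rule decomp_hyp[OF sU uU us])
    hence ue: "u = a *\<^sub>R us" using hz by auto
    have "a^2 = 1" using uu us unfolding ue by (simp add: power2_eq_square)
    hence a1: "\<bar>a\<bar> = 1" by (smt (verit) power2_eq_1_iff)
    have vh: "v - b *\<^sub>R vs \<in> hyp V vs" unfolding b_def by (rule decomp_hyp[OF sV vV vs])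
    hence "inner us (v - b *\<^sub>R vs) = 0" using co by (auto simp: crossorth_def hyp_def)
    hence "inner u v = a * b * inner us vs"
      using inner_split[of us "v - b *\<^sub>R vs" 0 vs u a v b] ue by simp
    moreover have "\<bar>b\<bar> \<le> 1"
      using Cauchy_Schwarz_ineq2[of v vs] vv vs by (simp add: b_def norm_eq_1[symmetric])
    ultimately show "\<bar>inner u v\<bar> \<le> \<bar>inner us vs\<bar>" using a1
      by (simp add: abs_mult mult_left_le_one_le)
  qed
  thus ?thesis using c1 by (simp add: vcomplete_Cons)
qed

lemma main2:
  fixes U V :: "'a::euclidean_space set"
  shows "1 \<le> k \<Longrightarrow> subspace U \<Longrightarrow> subspace V \<Longrightarrow> dim U = k \<Longrightarrow> dim V = k \<Longrightarrow> Pprop U V us vs c \<Longrightarrow>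
     \<exists>ps. vcomplete U V ps \<and> ps \<noteq> [] \<and> last ps = (us,vs)"
proof (induction k arbitrary: U V)
  case 0 thus ?case by simp
next
  case (Suc k)
  note sU = Suc.prems(2) and sV = Suc.prems(3) and P = Suc.prems(6)
  show ?case
  proof (cases "k = 0")
    case True
    thus ?thesis using main2_base[OF sU sV _ P] Suc.prems(4) by auto
  next
    case False
    from P have us: "us \<in> U" "inner us us = 1" and vs: "vs \<in> V" "inner vs vs = 1" and c: "c = \<bar>inner us vs\<bar>"
      and co: "crossorth U V us vs" and mp: "MP U V c" by (auto simp: Pprop_def)
    have usn: "us \<noteq> 0" and vsn: "vs \<noteq> 0" using us vs by auto
    define Ur where "Ur = hyp U us"
    define Vr where "Vr = hyp V vs"
    have sUr: "subspace Ur" and sVr: "subspace Vr" using sU sV by (simp_all add: Ur_def Vr_def subspace_hyp)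
    have dUr: "dim Ur = k" using dim_hyp[OF sU us(1) usn] Suc.prems(4) by (simp add: Ur_def)
    have dVr: "dim Vr = k" using dim_hyp[OF sV vs(1) vsn] Suc.prems(5) by (simp add: Vr_def)
    have exU: "\<exists>u\<in>Ur. inner u u = 1" using unit_exists[OF sUr] dUr False by simp
    have exV: "\<exists>v\<in>Vr. inner v v = 1" using unit_exists[OF sVr] dVr False by simp
    obtain u0 v0 where mxr: "ismax Ur Vr u0 v0" using exists_max[OF sUr sVr exU exV] by blast
    define R where "R = \<bar>inner u0 v0\<bar>"
    have u0r: "u0 \<in> Ur" "inner u0 u0 = 1" and v0r: "v0 \<in> Vr" "inner v0 v0 = 1" using mxr by (auto simp: ismax_def)
    hence u0: "u0 \<in> U" "inner u0 us = 0" and v0: "v0 \<in> V" "inner v0 vs = 0" by (auto simp: Ur_def Vr_def hyp_def)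
    have bil: "\<And>x y. x \<in> Ur \<Longrightarrow> y \<in> Vr \<Longrightarrow> \<bar>inner x y\<bar> \<le> R * norm x * norm y"
      using ismax_bil[OF sUr sVr mxr] by (simp add: R_def)
    have Rnn: "R \<ge> 0" by (simp add: R_def)
    have coU: "\<And>x. x \<in> U \<Longrightarrow> inner x us = 0 \<Longrightarrow> inner x vs = 0" using co by (auto simp: crossorth_def)
    have coV: "\<And>y. y \<in> V \<Longrightarrow> inner y vs = 0 \<Longrightarrow> inner us y = 0" using co by (auto simp: crossorth_def)
    have cR: "c \<le> R"
    proof -
      obtain u'' where u''r: "u'' \<in> Ur" "inner u'' u'' = 1" using exU by blast
      hence u''U: "u'' \<in> U" "inner u'' us = 0" by (auto simp: Ur_def hyp_def)
      obtain v where vV: "v \<in> V" "inner v v = 1" and cv: "c \<le> \<bar>inner u'' v\<bar>"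
        using mp u''U u''r unfolding MP_def by blast
      define v' where "v' = v - inner v vs *\<^sub>R vs"
      have v'r: "v' \<in> Vr" unfolding v'_def Vr_def by (rule decomp_hyp[OF sV vV(1) vs])
      have "inner u'' vs = 0" using coU u''U by blast
      hence "inner u'' v' = inner u'' v" by (simp add: v'_def inner_diff_right)
      moreover have "norm v' \<le> 1" unfolding v'_def by (rule norm_proj_le[OF vs(2) vV(2)])
      moreover have "norm u'' = 1" using u''r by (simp add: norm_eq_1)
      ultimately have "\<bar>inner u'' v\<bar> \<le> R" using bil[OF u''r(1) v'r] Rnn
        by (metis mult.right_neutral mult_left_mono order_trans)
      thus ?thesis using cv by simp
    qed
    have mx: "ismax U V u0 v0"
      unfolding ismax_def
    proof (intro conjI ballI impI u0(1) v0(1) u0r(2) v0r(2))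
      fix u v assume uU: "u \<in> U" and vV: "v \<in> V" and uu: "inner u u = 1" and vv: "inner v v = 1"
      define a where "a = inner u us"
      define b where "b = inner v vs"
      define u' where "u' = u - a *\<^sub>R us"
      define v' where "v' = v - b *\<^sub>R vs"
      have u'r: "u' \<in> Ur" unfolding u'_def a_def Ur_def by (rule decomp_hyp[OF sU uU us])
      have v'r: "v' \<in> Vr" unfolding v'_def b_def Vr_def by (rule decomp_hyp[OF sV vV vs])
      have o1: "inner us v' = 0" using coV v'r by (auto simp: Vr_def hyp_def)
      have o2: "inner u' vs = 0" using coU u'r by (auto simp: Ur_def hyp_def)
      have uv: "inner u v = a * b * inner us vs + inner u' v'"
        by (rule inner_split[OF o1 o2]) (simp_all add: u'_def v'_def)
      have u'o: "inner u' us = 0" and v'o: "inner v' vs = 0" using u'r v'r by (auto simp: Ur_def Vr_def hyp_def)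
      have na: "a^2 + (norm u')^2 = 1"
      proof -
        have "inner u u = a^2 * inner us us + 2 * a * inner u' us + inner u' u'"
          by (simp add: u'_def inner_add_left inner_add_right inner_diff_left inner_diff_right inner_commute power2_eq_square algebra_simps)
        thus ?thesis using uu us u'o by (simp add: power2_norm_eq_inner)
      qed
      have nb: "b^2 + (norm v')^2 = 1"
      proof -
        have "inner v v = b^2 * inner vs vs + 2 * b * inner v' vs + inner v' v'"
          by (simp add: v'_def inner_add_left inner_add_right inner_diff_left inner_diff_right inner_commute power2_eq_square algebra_simps)
        thus ?thesis using vv vs v'o by (simp add: power2_norm_eq_inner)
      qed
      have "\<bar>inner u v\<bar> \<le> \<bar>a\<bar> * \<bar>b\<bar> * c + R * norm u' * norm v'"
      proof -
        have "\<bar>inner u v\<bar> \<le> \<bar>a * b * inner us vs\<bar> + \<bar>inner u' v'\<bar>"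
          unfolding uv by (rule abs_triangle_ineq)
        moreover have "\<bar>a * b * inner us vs\<bar> = \<bar>a\<bar> * \<bar>b\<bar> * c" using c by (simp add: abs_mult)
        ultimately show ?thesis using bil[OF u'r v'r] by linarith
      qed
      also have "\<dots> \<le> \<bar>a\<bar> * \<bar>b\<bar> * R + R * norm u' * norm v'"
        using cR by (simp add: mult_left_mono)
      also have "\<dots> = R * (\<bar>a\<bar> * \<bar>b\<bar> + \<bar>norm u'\<bar> * \<bar>norm v'\<bar>)" by (simp add: algebra_simps)
      also have "\<dots> \<le> R * 1" using ineq1[OF na nb] Rnn by (rule mult_left_mono)
      finally show "\<bar>inner u v\<bar> \<le> \<bar>inner u0 v0\<bar>" by (simp add: R_def)
    qed
    have u0n: "u0 \<noteq> 0" and v0n: "v0 \<noteq> 0" using u0r v0r by auto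
    define U' where "U' = hyp U u0"
    define V' where "V' = hyp V v0"
    have sU': "subspace U'" and sV': "subspace V'" using sU sV by (simp_all add: U'_def V'_def subspace_hyp)
    have dU': "dim U' = k" using dim_hyp[OF sU u0(1) u0n] Suc.prems(4) by (simp add: U'_def)
    have dV': "dim V' = k" using dim_hyp[OF sV v0(1) v0n] Suc.prems(5) by (simp add: V'_def)
    have pertU: "\<And>x. x\<in>U \<Longrightarrow> inner x u0 = 0 \<Longrightarrow> inner x v0 = 0" using pert[OF sU mx] by blast
    have P': "Pprop U' V' us vs c"
      unfolding Pprop_def
    proof (intro conjI)
      show "us \<in> U'" using us u0 by (simp add: U'_def hyp_def inner_commute)
      show "vs \<in> V'" using vs v0 by (simp add: V'_def hyp_def inner_commute)
      show "inner us us = 1" "inner vs vs = 1" "c = \<bar>inner us vs\<bar>" using us vs c by simp_all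
      show "crossorth U' V' us vs" using co by (auto simp: crossorth_def U'_def V'_def hyp_def)
      show "MP U' V' c"
        unfolding MP_def
      proof (intro ballI impI)
        fix u assume uU': "u \<in> U'" and uu: "inner u u = 1"
        hence uU: "u \<in> U" "inner u u0 = 0" by (auto simp: U'_def hyp_def)
        obtain v where vV: "v \<in> V" "inner v v = 1" and cv: "c \<le> \<bar>inner u v\<bar>"
          using mp uU uu unfolding MP_def by blast
        define v' where "v' = v - inner v v0 *\<^sub>R v0"
        have v'r: "v' \<in> V'" unfolding v'_def V'_def by (rule decomp_hyp[OF sV vV(1) v0(1) v0r(2)])
        have "inner u v0 = 0" using pertU uU by blast
        hence uv': "inner u v' = inner u v" by (simp add: v'_def inner_diff_right)
        have nv': "norm v' \<le> 1" unfolding v'_def by (rule norm_proj_le[OF v0r(2) vV(2)])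
        show "\<exists>v\<in>V'. inner v v = 1 \<and> c \<le> \<bar>inner u v\<bar>"
        proof (cases "v' = 0")
          case True
          hence "c \<le> 0" using cv uv' by simp
          moreover obtain w where "w \<in> V'" "inner w w = 1" using unit_exists[OF sV'] dV' False by auto
          ultimately show ?thesis by force
        next
          case False
          have "inner u (sgn v') = inner u v' / norm v'" by (simp add: sgn_div_norm divide_inverse)
          hence "\<bar>inner u (sgn v')\<bar> = \<bar>inner u v\<bar> / norm v'" using uv' by simp
          moreover have "\<bar>inner u v\<bar> \<le> \<bar>inner u v\<bar> / norm v'"
            using nv' False by (simp add: le_divide_eq mult_left_le)
          ultimately have "c \<le> \<bar>inner u (sgn v')\<bar>" using cv by simp
          thus ?thesis using sgn_in[OF sV' v'r] unit_sgn[OF False] by blast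
        qed
      qed
    qed
    obtain ps where ps: "vcomplete U' V' ps" "ps \<noteq> []" "last ps = (us,vs)"
      using Suc.IH[OF _ sU' sV' dU' dV' P'] False by auto
    have "vcomplete U V ((u0,v0)#ps)" using mx ps(1) by (simp add: vcomplete_Cons U'_def V'_def)
    thus ?thesis using ps by auto
  qed
qed



definition is_proj :: "'a::euclidean_space set \<Rightarrow> ('a \<Rightarrow> 'a) \<Rightarrow> bool" where
  "is_proj V P \<longleftrightarrow> (\<forall>w. P w \<in> V \<and> (\<forall>y\<in>V. inner (w - P w) y = 0))"

lemma proj_inner: "is_proj V P \<Longrightarrow> y \<in> V \<Longrightarrow> inner y (P w) = inner y w"
  unfolding is_proj_def by (metis inner_commute inner_diff_left right_minus_eq)

lemma proj_mem: "is_proj V P \<Longrightarrow> P w \<in> V"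
  unfolding is_proj_def by blast

lemma proj_cross:
  fixes U V :: "'a::euclidean_space set"
  assumes sV: "subspace V" and pV: "is_proj V P" and u: "u \<in> U" and v: "v \<in> V"
    and co: "\<forall>y\<in>V. inner y v = 0 \<longrightarrow> inner u y = 0" and vv: "inner v v = 1"
  shows "P u = inner u v *\<^sub>R v"
proof -
  define d where "d = inner u v"
  define z where "z = P u - d *\<^sub>R v"
  have zV: "z \<in> V" unfolding z_def using sV proj_mem[OF pV] v by (simp add: subspace_diff subspace_scale)
  have "inner v (P u) = inner v u" by (rule proj_inner[OF pV v])
  hence "inner (P u) v = d" by (simp add: inner_commute d_def)
  hence "inner z v = 0" unfolding z_def using vv by (simp add: inner_diff_left)
  hence uz: "inner u z = 0" using co zV by blast
  have "inner z z = inner z (P u) - d * inner z v" unfolding z_def by (simp add: inner_diff_right)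
  also have "\<dots> = inner z u" using proj_inner[OF pV zV] \<open>inner z v = 0\<close> by simp
  also have "\<dots> = 0" using uz by (simp add: inner_commute)
  finally have "z = 0" by simp
  thus ?thesis by (simp add: z_def d_def)
qed

lemma rayleigh:
  fixes U V :: "'a::euclidean_space set"
  assumes sU: "subspace U" and pU: "is_proj U PU" and pV: "is_proj V PV"
    and mp: "MP U V c" and c: "c \<ge> 0" and w: "w \<in> U" "w \<noteq> 0" and eig: "PU (PV w) = \<mu> *\<^sub>R w"
  shows "c^2 \<le> \<mu>"
proof -
  have "inner w (PU (PV w)) = inner w (PV w)" by (rule proj_inner[OF pU w(1)])
  also have "\<dots> = inner (PV w) (PV w)" using proj_inner[OF pV proj_mem[OF pV], of w w] by (simp add: inner_commute)
  finally have e1: "\<mu> * inner w w = (norm (PV w))^2" using eig by (simp add: power2_norm_eq_inner)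
  obtain v where vV: "v \<in> V" "inner v v = 1" and cv: "c \<le> \<bar>inner (sgn w) v\<bar>"
    using mp sgn_in[OF sU w(1)] unit_sgn[OF w(2)] unfolding MP_def by blast
  have "inner (sgn w) v = inner w v / norm w" by (simp add: sgn_div_norm divide_inverse)
  moreover have "inner w v = inner (PV w) v" using proj_inner[OF pV vV(1), of w] by (simp add: inner_commute)
  moreover have "\<bar>inner (PV w) v\<bar> \<le> norm (PV w)"
    using Cauchy_Schwarz_ineq2[of "PV w" v] vV(2) by (simp add: norm_eq_1[symmetric])
  ultimately have "c * norm w \<le> norm (PV w)" using cv w(2) by (simp add: le_divide_eq)
  hence "(c * norm w)^2 \<le> (norm (PV w))^2" using c by (simp add: power_mono)
  hence "c^2 * inner w w \<le> \<mu> * inner w w" using e1 by (simp add: power_mult_distrib power2_norm_eq_inner)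
  moreover have "inner w w > 0" using w(2) by simp
  ultimately show ?thesis by simp
qed

lemma MP_mono: "MP U V c0 \<Longrightarrow> c \<le> c0 \<Longrightarrow> MP U V c"
  unfolding MP_def by (meson order_trans)

lemma inner_mat: "inner (M *v x) y = inner x (transpose M *v (y::real^'n))"
  by (metis dot_lmul_matrix inner_commute transpose_matrix_vector)

lemma penrose_proj:
  fixes A :: "real^'m^'n"
  assumes "A ** X ** A = A" "transpose (A ** X) = A ** X"
  shows "is_proj (range ((*v) A)) ((*v) (A ** X))"
  unfolding is_proj_def
proof (intro allI conjI ballI)
  fix w
  show "(A ** X) *v w \<in> range ((*v) A)" by (metis matrix_vector_mul_assoc rangeI)
  fix y assume "y \<in> range ((*v) A)"
  then obtain c where y: "y = A *v c" by blast
  have "inner ((A ** X) *v w) y = inner w ((A ** X) *v (A *v c))" using assms(2) by (simp add: inner_mat y)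
  also have "\<dots> = inner w y" using assms(1) by (simp add: matrix_vector_mul_assoc y)
  finally show "inner (w - (A ** X) *v w) y = 0" by (simp add: inner_diff_left)
qed



lemma fcr_inj: "full_column_rank A \<Longrightarrow> A *v x = A *v y \<Longrightarrow> x = y"
  unfolding full_column_rank_def by (metis eq_iff_diff_eq_0 matrix_vector_mult_diff_distrib)

lemma pinv_props:
  fixes A :: "real^'m^'n"
  assumes r: "full_column_rank A"
  shows "A ** pinv A ** A = A \<and> transpose (A ** pinv A) = A ** pinv A"
proof -
  define G where "G = transpose A ** A"
  have Ginj: "\<forall>x. G *v x = 0 \<longrightarrow> x = 0"
  proof (intro allI impI)
    fix x assume "G *v x = 0"
    hence "inner (A *v x) (A *v x) = 0" by (simp add: inner_mat G_def matrix_vector_mul_assoc)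
    hence "A *v x = 0" by simp
    thus "x = 0" using r by (simp add: full_column_rank_def)
  qed
  then obtain K where KG: "K ** G = mat 1" using matrix_left_invertible_ker by blast
  hence GK: "G ** K = mat 1" using matrix_left_right_inverse by blast
  have Gt: "transpose G = G" by (simp add: G_def matrix_transpose_mul)
  have Kt: "transpose K = K"
  proof -
    have tKG: "transpose K ** G = mat 1" using arg_cong[OF GK, of transpose] Gt by (simp add: matrix_transpose_mul)
    have "transpose K = transpose K ** (G ** K)" using GK by simp
    also have "\<dots> = (transpose K ** G) ** K" by (rule matrix_mul_assoc)
    also have "\<dots> = K" using tKG by simp
    finally show ?thesis .
  qed
  define X0 where "X0 = K ** transpose A"
  have X0A: "X0 ** A = mat 1" using KG by (simp add: X0_def G_def matrix_mul_assoc)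
  have P0: "A ** X0 ** A = A \<and> X0 ** A ** X0 = X0 \<and> transpose (A ** X0) = A ** X0 \<and> transpose (X0 ** A) = X0 ** A"
  proof (intro conjI)
    show "A ** X0 ** A = A" using X0A by (simp add: matrix_mul_assoc[symmetric])
    show "X0 ** A ** X0 = X0" using X0A by simp
    show "transpose (A ** X0) = A ** X0" using Kt by (simp add: X0_def matrix_transpose_mul matrix_mul_assoc)
    show "transpose (X0 ** A) = X0 ** A" using X0A by simp
  qed
  have uniq: "X = X0" if H: "A ** X ** A = A \<and> X ** A ** X = X \<and> transpose (A ** X) = A ** X \<and> transpose (X ** A) = X ** A" for X
  proof -
    have "transpose A ** (A ** X) = transpose A ** transpose (A ** X)" using H by simp
    also have "\<dots> = transpose ((A ** X) ** A)" by (simp add: matrix_transpose_mul)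
    also have "\<dots> = transpose A" using H by simp
    finally have "G ** X = transpose A" by (simp add: G_def matrix_mul_assoc)
    hence "K ** (G ** X) = X0" by (simp add: X0_def)
    thus ?thesis using KG by (simp add: matrix_mul_assoc)
  qed
  have "pinv A = X0" unfolding pinv_def
    by (rule the_equality) (use P0 uniq in blast)+
  thus ?thesis using P0 by simp
qed



definition evp :: "(('x \<Rightarrow> real) \<Rightarrow> 'a) \<Rightarrow> ('x \<Rightarrow> real) \<times> ('x \<Rightarrow> real) \<Rightarrow> 'a \<times> 'a" where
  "evp ev p = (ev (fst p), ev (snd p))"

locale transf =
  fixes ip :: "('x \<Rightarrow> real) \<Rightarrow> ('x \<Rightarrow> real) \<Rightarrow> real" and ev :: "('x \<Rightarrow> real) \<Rightarrow> 'a::euclidean_space"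
    and S K :: "('x \<Rightarrow> real) set" and UU VV :: "'a set"
  assumes ipE: "\<And>f g. ip f g = inner (ev f) (ev g)" and SU: "ev ` S = UU" and KV: "ev ` K = VV"
begin

lemma adm_transfer:
  assumes u: "u \<in> S" and v: "v \<in> K"
  shows "admissible_pair ip S K prev u v \<longleftrightarrow> vadm UU VV (map (evp ev) prev) (ev u) (ev v)"
  using u v SU KV by (auto simp: admissible_pair_def vadm_def ipE evp_def)

lemma max_transfer:
  "(\<forall>u' v'. admissible_pair ip S K prev u' v' \<longrightarrow> \<bar>ip u' v'\<bar> \<le> r) \<longleftrightarrow>
   (\<forall>y z. vadm UU VV (map (evp ev) prev) y z \<longrightarrow> \<bar>inner y z\<bar> \<le> r)"
proof
  assume H: "\<forall>u' v'. admissible_pair ip S K prev u' v' \<longrightarrow> \<bar>ip u' v'\<bar> \<le> r"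
  show "\<forall>y z. vadm UU VV (map (evp ev) prev) y z \<longrightarrow> \<bar>inner y z\<bar> \<le> r"
  proof (intro allI impI)
    fix y z assume a: "vadm UU VV (map (evp ev) prev) y z"
    hence "y \<in> UU" "z \<in> VV" by (auto simp: vadm_def)
    then obtain u' v' where "u' \<in> S" "v' \<in> K" "y = ev u'" "z = ev v'" using SU KV by blast
    thus "\<bar>inner y z\<bar> \<le> r" using H a adm_transfer ipE by metis
  qed
next
  assume H: "\<forall>y z. vadm UU VV (map (evp ev) prev) y z \<longrightarrow> \<bar>inner y z\<bar> \<le> r"
  show "\<forall>u' v'. admissible_pair ip S K prev u' v' \<longrightarrow> \<bar>ip u' v'\<bar> \<le> r"
  proof (intro allI impI)
    fix u' v' assume a: "admissible_pair ip S K prev u' v'"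
    hence "u' \<in> S" "v' \<in> K" by (auto simp: admissible_pair_def)
    thus "\<bar>ip u' v'\<bar> \<le> r" using H a adm_transfer ipE by metis
  qed
qed

lemma princ_transfer:
  assumes mem: "\<forall>p\<in>set ps. fst p \<in> S \<and> snd p \<in> K"
  shows "principal_seq ip S K ps \<longleftrightarrow> vprinc UU VV (map (evp ev) ps)"
proof -
  have "(admissible_pair ip S K (take j ps) (fst (ps ! j)) (snd (ps ! j)) \<and>
        (\<forall>u' v'. admissible_pair ip S K (take j ps) u' v' \<longrightarrow> \<bar>ip u' v'\<bar> \<le> \<bar>ip (fst (ps ! j)) (snd (ps ! j))\<bar>))
     \<longleftrightarrow> (vadm UU VV (take j (map (evp ev) ps)) (fst (map (evp ev) ps ! j)) (snd (map (evp ev) ps ! j)) \<and>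
        (\<forall>u' v'. vadm UU VV (take j (map (evp ev) ps)) u' v' \<longrightarrow>
           \<bar>inner u' v'\<bar> \<le> \<bar>inner (fst (map (evp ev) ps ! j)) (snd (map (evp ev) ps ! j))\<bar>))"
    if j: "j < length ps" for j
  proof -
    have "ps!j \<in> set ps" using j by simp
    hence m: "fst (ps!j) \<in> S" "snd (ps!j) \<in> K" using mem by blast+
    show ?thesis
      using adm_transfer[OF m, of "take j ps"] max_transfer[of "take j ps"] j
      by (simp add: take_map evp_def ipE)
  qed
  thus ?thesis unfolding principal_seq_def vprinc_def by simp
qed

lemma princ_mem: assumes "principal_seq ip S K ps" shows "\<forall>p\<in>set ps. fst p \<in> S \<and> snd p \<in> K"
proof
  fix p assume "p \<in> set ps"
  then obtain i where i: "i < length ps" and p: "p = ps!i" by (auto simp: in_set_conv_nth)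
  have "admissible_pair ip S K (take i ps) (fst (ps!i)) (snd (ps!i))"
    using assms i unfolding principal_seq_def by blast
  thus "fst p \<in> S \<and> snd p \<in> K" by (simp add: admissible_pair_def p)
qed

lemma compl_transfer:
  assumes mem: "\<forall>p\<in>set ps. fst p \<in> S \<and> snd p \<in> K"
  shows "complete_principal_seq ip S K ps \<longleftrightarrow> vcomplete UU VV (map (evp ev) ps)"
proof -
  have e1: "(\<exists>u\<in>S. ip u u = 1 \<and> (\<forall>p\<in>set ps. ip u (fst p) = 0)) \<longleftrightarrow>
            (\<exists>u\<in>UU. inner u u = 1 \<and> (\<forall>p\<in>set (map (evp ev) ps). inner u (fst p) = 0))"
    using SU by (auto simp: ipE evp_def)
  have e2: "(\<exists>u\<in>K. ip u u = 1 \<and> (\<forall>p\<in>set ps. ip u (snd p) = 0)) \<longleftrightarrow>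
            (\<exists>u\<in>VV. inner u u = 1 \<and> (\<forall>p\<in>set (map (evp ev) ps). inner u (snd p) = 0))"
    using KV by (auto simp: ipE evp_def)
  show ?thesis unfolding complete_principal_seq_def vcomplete_def princ_transfer[OF mem] e1 e2 ..
qed

end



lemma vprinc_mono:
  assumes "vprinc U V qs" "i \<le> j" "j < length qs"
  shows "\<bar>inner (fst (qs!j)) (snd (qs!j))\<bar> \<le> \<bar>inner (fst (qs!i)) (snd (qs!i))\<bar>"
proof -
  have aj: "vadm U V (take j qs) (fst (qs!j)) (snd (qs!j))"
    using assms unfolding vprinc_def by auto
  have mi: "\<forall>u' v'. vadm U V (take i qs) u' v' \<longrightarrow> \<bar>inner u' v'\<bar> \<le> \<bar>inner (fst (qs!i)) (snd (qs!i))\<bar>"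
    using assms unfolding vprinc_def by auto
  have "set (take i qs) \<subseteq> set (take j qs)" using assms(2) by (rule set_take_subset_set_take)
  hence "vadm U V (take i qs) (fst (qs!j)) (snd (qs!j))" using aj by (auto simp: vadm_def)
  thus ?thesis using mi by blast
qed

lemma unit_abs_le1:
  fixes u v :: "'a::real_inner"
  shows "inner u u = 1 \<Longrightarrow> inner v v = 1 \<Longrightarrow> \<bar>inner u v\<bar> \<le> 1"
  using Cauchy_Schwarz_ineq2[of u v] by (simp add: norm_eq_1[symmetric])

lemma orth_vec_exists:
  fixes VV W :: "'a::euclidean_space set"
  assumes "subspace W" "subspace VV" "W \<subseteq> VV" "dim W < dim VV"
  shows "\<exists>z\<in>VV. inner z z = 1 \<and> (\<forall>x\<in>W. inner x z = 0)"
proof -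
  let ?Z = "{y \<in> VV. \<forall>x\<in>W. orthogonal x y}"
  have "dim ?Z + dim W = dim VV" by (rule dim_subspace_orthogonal_to_vectors[OF assms(1-3)])
  hence "dim ?Z \<noteq> 0" using assms(4) by linarith
  hence "\<not> ?Z \<subseteq> {0}" by simp
  then obtain z where z: "z \<in> VV" "\<forall>x\<in>W. orthogonal x z" "z \<noteq> 0" by blast
  have "\<forall>x\<in>W. inner x (sgn z) = 0" using z(2) by (simp add: sgn_div_norm orthogonal_def)
  thus ?thesis using sgn_in[OF assms(2) z(1)] unit_sgn[OF z(3)] by blast
qed

lemma sin_arccos_sq: assumes "\<bar>x::real\<bar> \<le> 1" shows "(sin (arccos \<bar>x\<bar>))^2 = 1 - x^2"
proof -
  have "x^2 \<le> 1" using assms by (metis abs_le_square_iff abs_one one_power2)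
  thus ?thesis using assms by (simp add: sin_arccos)
qed



theorem theorem3:
  fixes T :: "'x \<Rightarrow> 'x"
    and xs :: "'n::finite \<Rightarrow> 'x"
    and \<psi> :: "'m::finite \<Rightarrow> 'x \<Rightarrow> real"
    and lam_max :: real and vmax :: "real^'m"
  defines "A \<equiv> data_matrix \<psi> xs"
    and "B \<equiv> data_matrix \<psi> (\<lambda>i. T (xs i))"
    and "ip \<equiv> emp_ip xs"
    and "S \<equiv> dict_span \<psi>"
  assumes rkA: "full_column_rank A"
    and rkB: "full_column_rank B"
    and eig: "real_eigenvector (mat 1 - (pinv A ** B) ** (pinv B ** A)) lam_max vmax"
    and largest: "\<forall>\<mu>. real_eigenvalue (mat 1 - (pinv A ** B) ** (pinv B ** A)) \<mu> \<longrightarrow> \<mu> \<le> lam_max"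
  shows "(\<forall>ps. complete_principal_seq ip S (koopman T ` S) ps \<longrightarrow>
             ps \<noteq> [] \<and>
             (\<forall>p\<in>set ps. pangle ip p \<le> pangle ip (last ps)) \<and>
             lam_max = (sin (pangle ip (last ps)))\<^sup>2)
      \<and> (\<exists>ps. complete_principal_seq ip S (koopman T ` S) ps \<and> ps \<noteq> [] \<and>
             fst (last ps) = (\<lambda>y. dict_comb \<psi> vmax y / sqrt (ip (dict_comb \<psi> vmax) (dict_comb \<psi> vmax))) \<and>
             remove_dir ip S (fst (last ps)) = remove_dir ip S (dict_comb \<psi> vmax))"
proof -
  define N where "N = real CARD('n)"
  have Npos: "N > 0" by (simp add: N_def)
  define sN where "sN = sqrt N"
  have sNpos: "sN > 0" using Npos by (simp add: sN_def)
  have sNsq: "sN * sN = N" using Npos by (simp add: sN_def)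
  define ev :: "('x \<Rightarrow> real) \<Rightarrow> real^'n" where "ev f = (\<chi> i. f (xs i) / sN)" for f
  define K where "K = koopman T ` S"
  define UU where "UU = range ((*v) A)"
  define VV where "VV = range ((*v) B)"
  have ipE: "ip f g = inner (ev f) (ev g)" for f g
  proof -
    have "inner (ev f) (ev g) = (\<Sum>i\<in>UNIV. f (xs i) * g (xs i) / N)"
      by (simp add: ev_def inner_vec_def sNsq[symmetric])
    also have "\<dots> = ip f g" by (simp add: ip_def emp_ip_def N_def sum_divide_distrib)
    finally show ?thesis by simp
  qed
  have evS: "ev (dict_comb \<psi> c) = A *v ((1/sN) *\<^sub>R c)" for c
    by (simp add: ev_def dict_comb_def A_def data_matrix_def matrix_vector_mult_def vec_eq_iff
        sum_divide_distrib mult.commute)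
  have evK: "ev (koopman T (dict_comb \<psi> c)) = B *v ((1/sN) *\<^sub>R c)" for c
    by (simp add: ev_def dict_comb_def B_def koopman_def data_matrix_def matrix_vector_mult_def vec_eq_iff
        sum_divide_distrib mult.commute)
  have sc: "(1/sN) *\<^sub>R (sN *\<^sub>R c) = c" for c :: "real^'m" using sNpos by simp
  have SU: "ev ` S = UU"
  proof
    show "ev ` S \<subseteq> UU" by (auto simp: S_def dict_span_def UU_def evS)
    show "UU \<subseteq> ev ` S"
    proof
      fix y assume "y \<in> UU"
      then obtain c where "y = A *v c" by (auto simp: UU_def)
      hence "y = ev (dict_comb \<psi> (sN *\<^sub>R c))" by (simp only: evS sc)
      thus "y \<in> ev ` S" by (simp add: S_def dict_span_def)
    qed
  qed
  have KV: "ev ` K = VV"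
  proof
    show "ev ` K \<subseteq> VV" by (auto simp: K_def S_def dict_span_def VV_def evK)
    show "VV \<subseteq> ev ` K"
    proof
      fix y assume "y \<in> VV"
      then obtain c where "y = B *v c" by (auto simp: VV_def)
      hence "y = ev (koopman T (dict_comb \<psi> (sN *\<^sub>R c)))" by (simp only: evK sc)
      thus "y \<in> ev ` K" by (simp add: K_def S_def dict_span_def)
    qed
  qed
  interpret tr: transf ip ev S K UU VV
    by unfold_locales (rule ipE SU KV)+
  have injS: "inj_on ev S"
  proof (rule inj_onI)
    fix f g assume "f \<in> S" "g \<in> S" "ev f = ev g"
    then obtain a b where ab: "f = dict_comb \<psi> a" "g = dict_comb \<psi> b" "A *v ((1/sN) *\<^sub>R a) = A *v ((1/sN) *\<^sub>R b)"
      by (auto simp: S_def dict_span_def evS)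
    hence "(1/sN) *\<^sub>R a = (1/sN) *\<^sub>R b" using fcr_inj[OF rkA] by blast
    hence "a = b" using sNpos by simp
    thus "f = g" using ab by simp
  qed
  have injK: "inj_on ev K"
  proof (rule inj_onI)
    fix f g assume "f \<in> K" "g \<in> K" "ev f = ev g"
    then obtain a b where ab: "f = koopman T (dict_comb \<psi> a)" "g = koopman T (dict_comb \<psi> b)"
        "B *v ((1/sN) *\<^sub>R a) = B *v ((1/sN) *\<^sub>R b)"
      by (auto simp: K_def S_def dict_span_def evK)
    hence "(1/sN) *\<^sub>R a = (1/sN) *\<^sub>R b" using fcr_inj[OF rkB] by blast
    hence "a = b" using sNpos by simp
    thus "f = g" using ab by simp
  qed
  have sUU: "subspace UU" unfolding UU_def by (rule linear_subspace_image[OF matrix_vector_mul_linear subspace_UNIV])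
  have sVV: "subspace VV" unfolding VV_def by (rule linear_subspace_image[OF matrix_vector_mul_linear subspace_UNIV])
  have dUU: "dim UU = dim (UNIV :: (real^'m) set)" unfolding UU_def
    by (rule dim_image_eq[OF matrix_vector_mul_linear]) (meson fcr_inj[OF rkA] inj_onI)
  have dVV: "dim VV = dim (UNIV :: (real^'m) set)" unfolding VV_def
    by (rule dim_image_eq[OF matrix_vector_mul_linear]) (meson fcr_inj[OF rkB] inj_onI)
  have dims: "dim UU = dim VV" using dUU dVV by simp
  have dpos: "dim UU \<noteq> 0" using dUU by simp
  define PA where "PA = A ** pinv A"
  define PB where "PB = B ** pinv B"
  have pA: "is_proj UU ((*v) PA)" unfolding PA_def UU_def
    using pinv_props[OF rkA] by (intro penrose_proj) auto
  have pB: "is_proj VV ((*v) PB)" unfolding PB_def VV_def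
    using pinv_props[OF rkB] by (intro penrose_proj) auto
  define Cm where "Cm = (pinv A ** B) ** (pinv B ** A)"
  define M where "M = mat 1 - Cm"
  have ACm: "A *v (Cm *v a) = PA *v (PB *v (A *v a))" for a
    by (simp add: Cm_def PA_def PB_def matrix_vector_mul_assoc matrix_mul_assoc)
  have eigC: "Cm *v a = \<nu> *\<^sub>R a \<longleftrightarrow> PA *v (PB *v (A *v a)) = \<nu> *\<^sub>R (A *v a)" for a \<nu>
  proof
    assume "Cm *v a = \<nu> *\<^sub>R a" thus "PA *v (PB *v (A *v a)) = \<nu> *\<^sub>R (A *v a)"
      using ACm[of a] by (simp add: matrix_vector_mult_scaleR)
  next
    assume "PA *v (PB *v (A *v a)) = \<nu> *\<^sub>R (A *v a)"
    hence "A *v (Cm *v a) = A *v (\<nu> *\<^sub>R a)" using ACm[of a] by (simp add: matrix_vector_mult_scaleR)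
    thus "Cm *v a = \<nu> *\<^sub>R a" by (rule fcr_inj[OF rkA])
  qed
  have eigM: "real_eigenvector M \<mu> a \<longleftrightarrow> a \<noteq> 0 \<and> Cm *v a = (1 - \<mu>) *\<^sub>R a" for \<mu> a
  proof -
    have "M *v a = a - Cm *v a" by (simp add: M_def matrix_vector_mult_diff_rdistrib)
    moreover have "(a - Cm *v a = \<mu> *\<^sub>R a) \<longleftrightarrow> (Cm *v a = (1 - \<mu>) *\<^sub>R a)"
      by (auto simp: algebra_simps)
    ultimately show ?thesis by (simp add: real_eigenvector_def)
  qed
  have Mdef: "mat 1 - (pinv A ** B) ** (pinv B ** A) = M" by (simp add: M_def Cm_def)
  have eig': "real_eigenvector M lam_max vmax" using eig by (simp add: Mdef)
  have largest': "\<And>\<mu>. real_eigenvalue M \<mu> \<Longrightarrow> \<mu> \<le> lam_max" using largest by (simp add: Mdef)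
  have Amem: "A *v a \<in> UU" for a by (simp add: UU_def)
  have Ane: "a \<noteq> 0 \<Longrightarrow> A *v a \<noteq> 0" for a using rkA by (auto simp: full_column_rank_def)
  (* eigenvalue facts *)
  have vmaxC: "vmax \<noteq> 0" "Cm *v vmax = (1 - lam_max) *\<^sub>R vmax" using eig' by (simp_all add: eigM)
  have lam_eig: "PA *v (PB *v (A *v vmax)) = (1 - lam_max) *\<^sub>R (A *v vmax)" using vmaxC eigC by blast
  (* from a complete vector sequence *)
  have seqfacts: "MP UU VV \<bar>inner u v\<bar> \<and> lam_max = 1 - (inner u v)^2"
    if vc: "vcomplete UU VV qs" and ne: "qs \<noteq> []" and uv: "u = fst (last qs)" "v = snd (last qs)" for qs u v
  proof -
    from main1[OF sUU sVV dims vc] ne uv have co: "crossorth UU VV u v" and mp: "MP UU VV \<bar>inner u v\<bar>" by auto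
    have "last qs \<in> set qs" using ne by simp
    from vprinc_mem[OF _ this] vc uv have mem: "u \<in> UU" "inner u u = 1" "v \<in> VV" "inner v v = 1"
      by (auto simp: vcomplete_def)
    define d where "d = inner u v"
    have co1: "\<forall>y\<in>VV. inner y v = 0 \<longrightarrow> inner u y = 0" using co by (simp add: crossorth_def)
    have co2: "\<forall>y\<in>UU. inner y u = 0 \<longrightarrow> inner v y = 0" using co by (simp add: crossorth_def inner_commute)
    have PBu: "PB *v u = d *\<^sub>R v" using proj_cross[OF sVV pB mem(1) mem(3) co1 mem(4)] by (simp add: d_def)
    have PAv: "PA *v v = d *\<^sub>R u" using proj_cross[OF sUU pA mem(3) mem(1) co2 mem(2)] by (simp add: d_def inner_commute)
    have PAPBu: "PA *v (PB *v u) = (d^2) *\<^sub>R u" using PBu PAv by (simp add: matrix_vector_mult_scaleR power2_eq_square)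
    obtain a0 where a0: "u = A *v a0" using mem(1) by (auto simp: UU_def)
    have a0ne: "a0 \<noteq> 0" using mem(2) a0 by auto
    have "Cm *v a0 = (d^2) *\<^sub>R a0" using eigC PAPBu a0 by simp
    hence "real_eigenvector M (1 - d^2) a0" using a0ne by (simp add: eigM)
    hence l1: "1 - d^2 \<le> lam_max" using largest' by (auto simp: real_eigenvalue_def)
    have "\<bar>d\<bar>^2 \<le> 1 - lam_max"
      using rayleigh[OF sUU pA pB mp[folded d_def] _ Amem Ane[OF vmaxC(1)] lam_eig] by simp
    hence "d^2 \<le> 1 - lam_max" by simp
    with l1 have "lam_max = 1 - d^2" by simp
    thus ?thesis using mp by (simp add: d_def)
  qed
  have part1: "\<forall>ps. complete_principal_seq ip S K ps \<longrightarrow>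
             ps \<noteq> [] \<and> (\<forall>p\<in>set ps. pangle ip p \<le> pangle ip (last ps)) \<and>
             lam_max = (sin (pangle ip (last ps)))\<^sup>2"
  proof (intro allI impI)
    fix ps assume cps: "complete_principal_seq ip S K ps"
    have "principal_seq ip S K ps" using cps by (simp add: complete_principal_seq_def)
    hence mem: "\<forall>p\<in>set ps. fst p \<in> S \<and> snd p \<in> K" by (rule tr.princ_mem)
    define qs where "qs = map (evp ev) ps"
    have vc: "vcomplete UU VV qs" using tr.compl_transfer[OF mem] cps by (simp add: qs_def)
    have len: "length qs = dim UU" using main1[OF sUU sVV dims vc] by simp
    hence ne: "ps \<noteq> []" using dpos by (auto simp: qs_def)
    hence qne: "qs \<noteq> []" by (simp add: qs_def)
    have pang: "pangle ip p = arccos \<bar>inner (fst (evp ev p)) (snd (evp ev p))\<bar>" for p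
      by (simp add: pangle_def ipE evp_def)
    have lastq: "last qs = evp ev (last ps)" using ne by (simp add: qs_def last_map)
    have vp: "vprinc UU VV qs" using vc by (simp add: vcomplete_def)
    have unitq: "\<bar>inner (fst (qs!i)) (snd (qs!i))\<bar> \<le> 1" if "i < length qs" for i
    proof -
      have "qs!i \<in> set qs" using that by simp
      from vprinc_mem[OF vp this] show ?thesis using unit_abs_le1 by blast
    qed
    have mono: "\<forall>p\<in>set ps. pangle ip p \<le> pangle ip (last ps)"
    proof
      fix p assume "p \<in> set ps"
      then obtain i where i: "i < length ps" and p: "p = ps!i" by (auto simp: in_set_conv_nth)
      define j where "j = length ps - 1"
      have ij: "i \<le> j" "j < length qs" using i ne by (auto simp: j_def qs_def)
      have lj: "last ps = ps!j" using ne by (simp add: j_def last_conv_nth)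
      have qi: "qs!i = evp ev p" and qj: "qs!j = evp ev (last ps)" using i ij lj p by (auto simp: qs_def)
      have le: "\<bar>inner (fst (qs!j)) (snd (qs!j))\<bar> \<le> \<bar>inner (fst (qs!i)) (snd (qs!i))\<bar>"
        by (rule vprinc_mono[OF vp ij])
      have "arccos \<bar>inner (fst (qs!i)) (snd (qs!i))\<bar> \<le> arccos \<bar>inner (fst (qs!j)) (snd (qs!j))\<bar>"
        using le unitq[of i] ij by (intro arccos_le_arccos) auto
      thus "pangle ip p \<le> pangle ip (last ps)" by (simp add: pang qi qj)
    qed
    define u where "u = fst (last qs)"
    define v where "v = snd (last qs)"
    have sf: "lam_max = 1 - (inner u v)^2" using seqfacts[OF vc qne u_def v_def] by simp
    have "\<bar>inner u v\<bar> \<le> 1"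
    proof -
      have "last qs \<in> set qs" using qne by simp
      from vprinc_mem[OF vp this] have "inner u u = 1" "inner v v = 1" by (simp_all add: u_def v_def)
      thus ?thesis by (rule unit_abs_le1)
    qed
    hence "(sin (pangle ip (last ps)))^2 = 1 - (inner u v)^2"
      using sin_arccos_sq by (simp add: pang lastq[symmetric] u_def v_def)
    thus "ps \<noteq> [] \<and> (\<forall>p\<in>set ps. pangle ip p \<le> pangle ip (last ps)) \<and>
             lam_max = (sin (pangle ip (last ps)))\<^sup>2" using ne mono sf by simp
  qed
  have part2: "\<exists>ps. complete_principal_seq ip S K ps \<and> ps \<noteq> [] \<and>
             fst (last ps) = (\<lambda>y. dict_comb \<psi> vmax y / sqrt (ip (dict_comb \<psi> vmax) (dict_comb \<psi> vmax))) \<and>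
             remove_dir ip S (fst (last ps)) = remove_dir ip S (dict_comb \<psi> vmax)"
  proof -
    define F0 where "F0 = dict_comb \<psi> vmax"
    define s where "s = sqrt (ip F0 F0)"
    define F where "F = (\<lambda>y. F0 y / s)"
    define a1 where "a1 = (1/sN) *\<^sub>R vmax"
    define w where "w = A *v a1"
    have evF0: "ev F0 = w" by (simp add: F0_def evS w_def a1_def)
    have a1ne: "a1 \<noteq> 0" using vmaxC(1) sNpos by (simp add: a1_def)
    have wne: "w \<noteq> 0" using Ane[OF a1ne] w_def by simp
    have wU: "w \<in> UU" using Amem w_def by simp
    have Ca1: "Cm *v a1 = (1 - lam_max) *\<^sub>R a1" using vmaxC(2) by (simp add: a1_def matrix_vector_mult_scaleR)
    have weig: "PA *v (PB *v w) = (1 - lam_max) *\<^sub>R w" using eigC Ca1 w_def by blast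
    have s_eq: "s = norm w" by (simp add: s_def ipE evF0 norm_eq_sqrt_inner)
    have spos: "s > 0" using wne s_eq by simp
    define us where "us = sgn w"
    have evF': "ev F = (1/s) *\<^sub>R ev F0" by (simp add: ev_def F_def vec_eq_iff)
    have evF: "ev F = us" using evF' by (simp add: us_def sgn_div_norm evF0 s_eq divide_inverse)
    have FS: "F \<in> S"
    proof -
      have "F = dict_comb \<psi> ((1/s) *\<^sub>R vmax)"
        by (simp add: F_def F0_def dict_comb_def fun_eq_iff sum_divide_distrib)
      thus ?thesis by (simp add: S_def dict_span_def)
    qed
    have usU: "us \<in> UU" using sgn_in[OF sUU wU] by (simp add: us_def)
    have usu: "inner us us = 1" using unit_sgn[OF wne] by (simp add: us_def)
    define lam where "lam = 1 - lam_max"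
    have useig: "PA *v (PB *v us) = lam *\<^sub>R us"
      by (simp add: us_def sgn_div_norm matrix_vector_mult_scaleR weig lam_def)
    have iPB: "inner us (PB *v us) = (norm (PB *v us))^2"
      using proj_inner[OF pB proj_mem[OF pB], of us us] by (simp add: inner_commute power2_norm_eq_inner)
    have ray: "(norm (PB *v us))^2 = lam"
    proof -
      have "inner us (PA *v (PB *v us)) = inner us (PB *v us)" by (rule proj_inner[OF pA usU])
      thus ?thesis using useig usu iPB by simp
    qed
    obtain qs0 where vc0: "vcomplete UU VV qs0" using main0[OF sUU sVV refl dims[symmetric]] by blast
    have qne0: "qs0 \<noteq> []" using main1[OF sUU sVV dims vc0] dpos by auto
    define u0 where "u0 = fst (last qs0)"
    define v0 where "v0 = snd (last qs0)"
    have sf0: "MP UU VV \<bar>inner u0 v0\<bar>" "lam_max = 1 - (inner u0 v0)^2"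
      using seqfacts[OF vc0 qne0 u0_def v0_def] by auto
    define c where "c = norm (PB *v us)"
    have cc: "c = \<bar>inner u0 v0\<bar>"
    proof -
      have "c^2 = (inner u0 v0)^2" using ray sf0(2) by (simp add: c_def lam_def)
      hence "sqrt (c^2) = sqrt ((inner u0 v0)^2)" by simp
      thus ?thesis by (simp add: c_def)
    qed
    have mpc: "MP UU VV c" using sf0(1) cc by simp
    have exvs: "\<exists>vs. Pprop UU VV us vs c"
    proof (cases "PB *v us = 0")
      case False
      define vs where "vs = sgn (PB *v us)"
      have cpos: "c > 0" using False by (simp add: c_def)
      have vsV: "vs \<in> VV" using sgn_in[OF sVV proj_mem[OF pB]] by (simp add: vs_def)
      have vsu: "inner vs vs = 1" using unit_sgn[OF False] by (simp add: vs_def)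
      have PBus: "PB *v us = c *\<^sub>R vs" using cpos by (simp add: vs_def c_def sgn_div_norm)
      have "inner us (PB *v us) = c^2" using iPB by (simp add: c_def)
      hence "c * inner us vs = c^2" using PBus by simp
      hence "inner us vs = c" using cpos by (simp add: power2_eq_square)
      hence cabs: "c = \<bar>inner us vs\<bar>" using cpos by simp
      have co: "crossorth UU VV us vs"
        unfolding crossorth_def
      proof (intro conjI ballI impI)
        fix y assume y: "y \<in> VV" "inner y vs = 0"
        have "inner y (PB *v us) = inner y us" by (rule proj_inner[OF pB y(1)])
        hence "inner y us = c * inner y vs" using PBus by simp
        thus "inner us y = 0" using y(2) by (simp add: inner_commute)
      next
        fix x assume x: "x \<in> UU" "inner x us = 0"
        have "inner x (PA *v (PB *v us)) = inner x (PB *v us)" by (rule proj_inner[OF pA x(1)])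
        hence "inner x (PB *v us) = 0" using useig x(2) by simp
        thus "inner x vs = 0" using PBus cpos by simp
      qed
      show ?thesis using usU vsV usu vsu cabs co mpc unfolding Pprop_def by blast
    next
      case True
      have c0: "c = 0" using True by (simp add: c_def)
      define W where "W = (*v) PB ` hyp UU us"
      have sW: "subspace W" unfolding W_def
        by (rule linear_subspace_image[OF matrix_vector_mul_linear subspace_hyp[OF sUU]])
      have WV: "W \<subseteq> VV" using proj_mem[OF pB] by (auto simp: W_def)
      have usne: "us \<noteq> 0" using usu by auto
      have "dim W \<le> dim (hyp UU us)" unfolding W_def by (rule dim_image_le[OF matrix_vector_mul_linear])
      also have "\<dots> = dim UU - 1" by (rule dim_hyp[OF sUU usU usne])
      finally have "dim W < dim VV" using dims dpos by linarith
      then obtain vs where vsV: "vs \<in> VV" and vsu: "inner vs vs = 1" and vsW: "\<forall>x\<in>W. inner x vs = 0"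
        using orth_vec_exists[OF sW sVV WV] by blast
      have usvs: "inner us vs = 0"
      proof -
        have "inner vs (PB *v us) = inner vs us" by (rule proj_inner[OF pB vsV])
        thus ?thesis using True by (simp add: inner_commute)
      qed
      have co: "crossorth UU VV us vs"
        unfolding crossorth_def
      proof (intro conjI ballI impI)
        fix y assume y: "y \<in> VV" "inner y vs = 0"
        have "inner y (PB *v us) = inner y us" by (rule proj_inner[OF pB y(1)])
        thus "inner us y = 0" using True by (simp add: inner_commute)
      next
        fix x assume x: "x \<in> UU" "inner x us = 0"
        hence "PB *v x \<in> W" by (simp add: W_def hyp_def)
        hence "inner (PB *v x) vs = 0" using vsW by blast
        moreover have "inner vs (PB *v x) = inner vs x" by (rule proj_inner[OF pB vsV])
        ultimately show "inner x vs = 0" by (simp add: inner_commute)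
      qed
      show ?thesis using usU vsV usu vsu co mpc c0 usvs unfolding Pprop_def by auto
    qed
    then obtain vs where P: "Pprop UU VV us vs c" by blast
    have d1: "1 \<le> dim UU" using dpos by linarith
    obtain qs where q: "vcomplete UU VV qs" "qs \<noteq> []" "last qs = (us, vs)"
      using main2[OF d1 sUU sVV refl dims[symmetric] P] by blast
    define ps where "ps = map (\<lambda>q. (inv_into S ev (fst q), inv_into K ev (snd q))) qs"
    have vpq: "vprinc UU VV qs" using q(1) by (simp add: vcomplete_def)
    have qmem: "\<forall>q\<in>set qs. fst q \<in> UU \<and> snd q \<in> VV" using vprinc_mem[OF vpq] by blast
    have mem: "\<forall>p\<in>set ps. fst p \<in> S \<and> snd p \<in> K"
      using qmem SU KV by (auto simp: ps_def inv_into_into)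
    have mapq: "map (evp ev) ps = qs"
      unfolding ps_def map_map
    proof (rule map_idI)
      fix q assume "q \<in> set qs"
      hence "fst q \<in> ev ` S" "snd q \<in> ev ` K" using qmem SU KV by auto
      thus "(evp ev \<circ> (\<lambda>q. (inv_into S ev (fst q), inv_into K ev (snd q)))) q = q"
        by (simp add: evp_def f_inv_into_f)
    qed
    have cps: "complete_principal_seq ip S K ps" using tr.compl_transfer[OF mem] q(1) mapq by simp
    have pne: "ps \<noteq> []" using q(2) by (simp add: ps_def)
    have "fst (last ps) = inv_into S ev us" using q(2,3) by (simp add: ps_def last_map)
    also have "\<dots> = F" using inv_into_f_f[OF injS FS] evF by simp
    finally have lastF: "fst (last ps) = F" .
    have Feq: "F = (\<lambda>y. dict_comb \<psi> vmax y / sqrt (ip (dict_comb \<psi> vmax) (dict_comb \<psi> vmax)))"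
      by (simp add: F_def F0_def s_def)
    have rd: "remove_dir ip S F = remove_dir ip S F0"
    proof -
      have "ip f F = ip f F0 / s" for f using evF' by (simp add: ipE divide_inverse mult.commute)
      thus ?thesis using spos by (simp add: remove_dir_def)
    qed
    show ?thesis using cps pne lastF Feq rd unfolding F0_def by blast
  qed
  show ?thesis using part1 part2 by (simp add: K_def)
qed

end
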